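(* For every integer $r\ge 2$, $m(K_{1*r,3})=3$.
   Context: All graphs are finite, simple and undirected. A list assignment $L$ for a graph $G$ assigns to each vertex $v$ a set $L(v)$ of colors; an $L$-coloring is a proper vertex coloring $c$ of $G$ with $c(v)\in L(v)$ for every vertex $v$. A $k$-list assignment is a list assignment with $|L(v)|=k$ for all $v$. $G$ is uniquely $k$-list colorable (U$k$LC) if there exists a $k$-list assignment $L$ such that $G$ has exactly one $L$-coloring. $G$ has property $M(k)$ if it is not U$k$LC, i.e. for every $k$-list assignment $L$, $G$ has either no $L$-coloring or at least two $L$-colorings. The m-number $m(G)$ is the least integer $k\ge 1$ such that $G$ has property $M(k)$. $K_{1*r,s}$ denotes the complete $(r+1)$-partite graph with $r$ parts of size $1$ and one part of size $s$. *)

theory Defs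
  imports Main
begin

(* A finite simple graph is given by a finite vertex set V and a symmetric,
   irreflexive edge relation E. Colours are natural numbers. *)

definition k_list_assignment :: "'a set \<Rightarrow> ('a \<Rightarrow> nat set) \<Rightarrow> nat \<Rightarrow> bool" where
  "k_list_assignment V L k \<longleftrightarrow> (\<forall>v\<in>V. finite (L v) \<and> card (L v) = k)"

(* an L-colouring; to count colourings, the function is normalised to be
   'undefined' outside V *)
definition L_coloring :: "'a set \<Rightarrow> ('a \<Rightarrow> 'a \<Rightarrow> bool) \<Rightarrow> ('a \<Rightarrow> nat set) \<Rightarrow> ('a \<Rightarrow> nat) \<Rightarrow> bool" where
  "L_coloring V E L c \<longleftrightarrow>
     (\<forall>v\<in>V. c v \<in> L v) \<and>
     (\<forall>u\<in>V. \<forall>v\<in>V. E u v \<longrightarrow> c u \<noteq> c v) \<and>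
     (\<forall>v. v \<notin> V \<longrightarrow> c v = undefined)"

definition uniquely_k_list_colorable :: "'a set \<Rightarrow> ('a \<Rightarrow> 'a \<Rightarrow> bool) \<Rightarrow> nat \<Rightarrow> bool" where
  "uniquely_k_list_colorable V E k \<longleftrightarrow>
     (\<exists>L. k_list_assignment V L k \<and> (\<exists>!c. L_coloring V E L c))"

definition property_M :: "'a set \<Rightarrow> ('a \<Rightarrow> 'a \<Rightarrow> bool) \<Rightarrow> nat \<Rightarrow> bool" where
  "property_M V E k \<longleftrightarrow> \<not> uniquely_k_list_colorable V E k"

definition m_number :: "'a set \<Rightarrow> ('a \<Rightarrow> 'a \<Rightarrow> bool) \<Rightarrow> nat" where
  "m_number V E = (LEAST k. k \<ge> 1 \<and> property_M V E k)"

(* K_{1*r,s}: vertices 0..r+s-1; vertices 0..r-1 are the r singleton parts,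
   vertices r..r+s-1 form the part of size s. *)
definition K1rs_vertices :: "nat \<Rightarrow> nat \<Rightarrow> nat set" where
  "K1rs_vertices r s = {0..<r+s}"

definition K1rs_edge :: "nat \<Rightarrow> nat \<Rightarrow> nat \<Rightarrow> bool" where
  "K1rs_edge r u v \<longleftrightarrow> u \<noteq> v \<and> \<not> (r \<le> u \<and> r \<le> v)"

end

theory Submission
  imports Defs
begin

lemma second_coloring:
  fixes V :: "'a set" and L :: "'a \<Rightarrow> nat set" and c :: "'a \<Rightarrow> nat"
  assumes fin: "finite V"
    and kl: "k_list_assignment V L 3"
    and col: "L_coloring V E L c"
    and Xne: "X \<noteq> {}"
    and Xdef: "X = {u\<in>V. \<forall>w\<in>V. w \<noteq> u \<longrightarrow> c w \<noteq> c u}"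
    and sh: "\<forall>w1\<in>V-X. \<forall>w2\<in>V-X. c w1 = c w2"
  shows "\<exists>c'. L_coloring V E L c' \<and> c' \<noteq> c"
proof -
  have lst: "\<And>v. v\<in>V \<Longrightarrow> c v \<in> L v"
    and prp: "\<And>u v. u\<in>V \<Longrightarrow> v\<in>V \<Longrightarrow> E u v \<Longrightarrow> c u \<noteq> c v"
    and out: "\<And>v. v\<notin>V \<Longrightarrow> c v = undefined"
    using col unfolding L_coloring_def by auto
  have uniq: "\<And>w v. w\<in>X \<Longrightarrow> v\<in>V \<Longrightarrow> v\<noteq>w \<Longrightarrow> c v \<noteq> c w" using Xdef by auto
  have XV: "X \<subseteq> V" using Xdef by auto
  obtain s where s: "\<And>w. w\<in>V-X \<Longrightarrow> c w = s"
  proof (cases "V - X = {}")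
    case True then show ?thesis using that by auto
  next
    case False
    then obtain w0 where "w0 \<in> V - X" by auto
    then show ?thesis using that sh by metis
  qed
  show ?thesis
  proof (cases "\<exists>u\<in>X. \<exists>x\<in>L u. x \<notin> c ` V")
    case True
    then obtain u x where u: "u\<in>X" "x\<in>L u" "x \<notin> c`V" by blast
    have uV: "u \<in> V" using u XV by auto
    have "L_coloring V E L (c(u := x))" unfolding L_coloring_def
    proof (intro conjI ballI allI impI)
      fix v assume "v \<in> V" then show "(c(u := x)) v \<in> L v" using lst u by auto
    next
      fix v w assume vw: "v \<in> V" "w \<in> V" "E v w"
      then have "c v \<noteq> c w" using prp by auto
      then show "(c(u := x)) v \<noteq> (c(u := x)) w" using vw u by auto
    next
      fix v assume "v \<notin> V" then show "(c(u := x)) v = undefined" using out uV by auto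
    qed
    moreover have "c(u := x) \<noteq> c"
    proof
      assume "c(u := x) = c"
      then have "c u = x" by (metis fun_upd_same)
      then show False using u uV by auto
    qed
    ultimately show ?thesis by blast
  next
    case False
    have ex: "\<forall>u\<in>X. \<exists>w. w\<in>X \<and> w\<noteq>u \<and> c w \<in> L u"
    proof
      fix u assume u: "u\<in>X"
      have c3: "card (L u) = 3" and fL: "finite (L u)" using kl XV u unfolding k_list_assignment_def by auto
      have "card {c u, s} \<le> 2" by (simp add: card_insert_if)
      moreover have "card (L u) - card {c u, s} \<le> card (L u - {c u, s})"
        by (rule diff_card_le_card_Diff) simp
      ultimately have "card (L u - {c u, s}) \<noteq> 0" using c3 by linarith
      then obtain x where x: "x \<in> L u" "x \<noteq> c u" "x \<noteq> s"
        by (metis Diff_iff card.empty ex_in_conv insertCI)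
      then have "x \<in> c ` V" using False u by auto
      then obtain w where w: "w \<in> V" "x = c w" by auto
      have "w \<in> X" using s w x by blast
      moreover have "w \<noteq> u" using w x by auto
      ultimately show "\<exists>w. w\<in>X \<and> w\<noteq>u \<and> c w \<in> L u" using w x by auto
    qed
    define g where "g = (\<lambda>u. SOME w. w\<in>X \<and> w\<noteq>u \<and> c w \<in> L u)"
    have g: "g u \<in> X \<and> g u \<noteq> u \<and> c (g u) \<in> L u" if "u \<in> X" for u
      using ex that unfolding g_def by (metis (mono_tags, lifting) someI_ex)
    define P where "P Y \<longleftrightarrow> Y \<subseteq> X \<and> Y \<noteq> {} \<and> g`Y \<subseteq> Y" for Y
    have "P X" using g Xne by (auto simp: P_def)
    then obtain Y where PY: "P Y" and minY: "\<And>Z. P Z \<Longrightarrow> card Y \<le> card Z"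
      using ex_has_least_nat[of P X card] by blast
    have YX: "Y \<subseteq> X" and Yne: "Y \<noteq> {}" and gYs: "g`Y \<subseteq> Y" using PY P_def by auto
    have finY: "finite Y" using YX XV fin finite_subset by blast
    have "P (g`Y)" using PY unfolding P_def by auto
    hence "card Y \<le> card (g`Y)" by (rule minY)
    moreover have "card (g`Y) \<le> card Y" by (rule card_image_le[OF finY])
    ultimately have cardeq: "card (g`Y) = card Y" by simp
    have gY: "g`Y = Y" using card_subset_eq[OF finY gYs] cardeq by simp
    have inj: "inj_on g Y" using eq_card_imp_inj_on[OF finY cardeq] .
    obtain u0 where u0: "u0 \<in> Y" using Yne by auto
    define c' where "c' = (\<lambda>u. if u\<in>Y then c (g u) else c u)"
    have "L_coloring V E L c'" unfolding L_coloring_def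
    proof (intro conjI ballI allI impI)
      fix v assume "v \<in> V" then show "c' v \<in> L v" using lst g YX by (auto simp: c'_def)
    next
      fix u v assume uv: "u \<in> V" "v \<in> V" "E u v"
      then have cuv: "c u \<noteq> c v" using prp by auto
      then have une: "u \<noteq> v" by auto
      show "c' u \<noteq> c' v"
      proof (cases "u \<in> Y")
        case uY: True
        have guX: "g u \<in> X" using g uY YX by auto
        show ?thesis
        proof (cases "v \<in> Y")
          case vY: True
          have "g u \<noteq> g v" using inj uY vY une inj_on_def by metis
          moreover have "g v \<in> V" using g vY YX XV by auto
          ultimately have "c (g v) \<noteq> c (g u)" using uniq guX by metis
          then show ?thesis using uY vY by (simp add: c'_def)
        next
          case vY: False
          have "g u \<in> Y" using gY uY by auto
          then have "v \<noteq> g u" using vY by auto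
          then have "c v \<noteq> c (g u)" using uniq guX uv by metis
          then show ?thesis using uY vY by (simp add: c'_def)
        qed
      next
        case uY: False
        show ?thesis
        proof (cases "v \<in> Y")
          case vY: True
          have gvX: "g v \<in> X" using g vY YX by auto
          have "g v \<in> Y" using gY vY by auto
          then have "u \<noteq> g v" using uY by auto
          then have "c u \<noteq> c (g v)" using uniq gvX uv by metis
          then show ?thesis using uY vY by (simp add: c'_def)
        next
          case vY: False
          then show ?thesis using uY cuv by (simp add: c'_def)
        qed
      qed
    next
      fix v assume "v \<notin> V" then show "c' v = undefined" using out YX XV by (auto simp: c'_def)
    qed
    moreover have "c' \<noteq> c"
    proof
      assume "c' = c"
      then have "c (g u0) = c u0" using u0 by (metis c'_def)
      moreover have "g u0 \<in> X" "g u0 \<noteq> u0" using g u0 YX by auto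
      moreover have "u0 \<in> V" using u0 YX XV by auto
      ultimately show False using uniq by metis
    qed
    ultimately show ?thesis by blast
  qed
qed

lemma M3:
  assumes "r \<ge> 1"
  shows "property_M (K1rs_vertices r 3) (K1rs_edge r) 3"
proof -
  let ?V = "K1rs_vertices r 3"
  let ?E = "K1rs_edge r"
  show ?thesis unfolding property_M_def uniquely_k_list_colorable_def
  proof
    assume "\<exists>L. k_list_assignment ?V L 3 \<and> (\<exists>!c. L_coloring ?V ?E L c)"
    then obtain L c where kl: "k_list_assignment ?V L 3" and col: "L_coloring ?V ?E L c"
      and un: "\<And>c'. L_coloring ?V ?E L c' \<Longrightarrow> c' = c" by blast
    define X where "X = {u\<in>?V. \<forall>w\<in>?V. w \<noteq> u \<longrightarrow> c w \<noteq> c u}"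
    have prp: "\<And>u v. u\<in>?V \<Longrightarrow> v\<in>?V \<Longrightarrow> ?E u v \<Longrightarrow> c u \<noteq> c v"
      using col unfolding L_coloring_def by auto
    have AX: "u \<in> X" if "u < r" for u
    proof -
      have "u \<in> ?V" using that by (simp add: K1rs_vertices_def)
      moreover have "c w \<noteq> c u" if "w \<in> ?V" "w \<noteq> u" for w
        using prp[of w u] that \<open>u < r\<close> \<open>u \<in> ?V\<close> by (auto simp: K1rs_edge_def)
      ultimately show ?thesis unfolding X_def by auto
    qed
    have Xne: "X \<noteq> {}" using AX[of 0] assms by auto
    have sh: "\<forall>w1\<in>?V-X. \<forall>w2\<in>?V-X. c w1 = c w2"
    proof (intro ballI, rule ccontr)
      fix w1 w2 assume w1: "w1 \<in> ?V - X" and w2: "w2 \<in> ?V - X" and ne: "c w1 \<noteq> c w2"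
      obtain w1' where w1': "w1' \<in> ?V" "w1' \<noteq> w1" "c w1' = c w1" using w1 X_def by auto
      obtain w2' where w2': "w2' \<in> ?V" "w2' \<noteq> w2" "c w2' = c w2" using w2 X_def by auto
      have "r \<le> w1" "r \<le> w2" using w1 w2 AX by (meson DiffD2 not_le)+
      moreover have "w1' \<notin> X" "w2' \<notin> X" using w1 w2 w1' w2' X_def by auto
      then have "r \<le> w1'" "r \<le> w2'" using AX by (meson not_le)+
      moreover have "w1 \<noteq> w2" "w1 \<noteq> w2'" "w1' \<noteq> w2" "w1' \<noteq> w2'"
        using ne w1' w2' by auto
      moreover have "w1 < r+3" "w2 < r+3" "w1' < r+3" "w2' < r+3"
        using w1 w2 w1' w2' by (auto simp: K1rs_vertices_def)
      ultimately show False using w1' w2' by linarith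
    qed
    have fin: "finite ?V" by (simp add: K1rs_vertices_def)
    obtain c' where "L_coloring ?V ?E L c'" "c' \<noteq> c"
      using second_coloring[OF fin kl col Xne X_def sh] by blast
    then show False using un by auto
  qed
qed

lemma notM1:
  shows "\<not> property_M (K1rs_vertices r 3) (K1rs_edge r) 1"
proof -
  let ?V = "K1rs_vertices r 3"
  let ?E = "K1rs_edge r"
  define L where "L v = {if v < r then v else r}" for v :: nat
  define c0 where "c0 v = (if v \<in> ?V then (if v < r then v else r) else undefined)" for v :: nat
  have kl: "k_list_assignment ?V L 1" by (simp add: k_list_assignment_def L_def)
  have c0: "L_coloring ?V ?E L c0"
    by (auto simp: L_coloring_def L_def c0_def K1rs_edge_def)
  have un: "c = c0" if "L_coloring ?V ?E L c" for c
  proof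
    fix v show "c v = c0 v" using that by (cases "v \<in> ?V") (auto simp: L_coloring_def L_def c0_def)
  qed
  show ?thesis unfolding property_M_def uniquely_k_list_colorable_def
    using kl c0 un by blast
qed

lemma notM2:
  assumes "r \<ge> 2"
  shows "\<not> property_M (K1rs_vertices r 3) (K1rs_edge r) 2"
proof -
  let ?V = "K1rs_vertices r 3"
  let ?E = "K1rs_edge r"
  define L where "L v = (if v < r then {v, r} else if v = r+1 then {r, 1} else {r, 0})" for v :: nat
  define c0 where "c0 v = (if v \<in> ?V then (if v < r then v else r) else undefined)" for v :: nat
  have kl: "k_list_assignment ?V L 2" using assms by (auto simp: k_list_assignment_def L_def)
  have c0: "L_coloring ?V ?E L c0"
    by (auto simp: L_coloring_def L_def c0_def K1rs_edge_def K1rs_vertices_def)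
  have un: "c = c0" if col: "L_coloring ?V ?E L c" for c
  proof -
    have lst: "\<And>v. v\<in>?V \<Longrightarrow> c v \<in> L v"
      and prp: "\<And>u v. u\<in>?V \<Longrightarrow> v\<in>?V \<Longrightarrow> ?E u v \<Longrightarrow> c u \<noteq> c v"
      and out: "\<And>v. v\<notin>?V \<Longrightarrow> c v = undefined"
      using col unfolding L_coloring_def by auto
    have Vi: "v \<in> ?V \<longleftrightarrow> v < r + 3" for v by (simp add: K1rs_vertices_def)
    have A: "c i = i" if "i < r" for i
    proof (rule ccontr)
      assume "c i \<noteq> i"
      then have ci: "c i = r" using lst[of i] that by (auto simp: L_def Vi)
      have "c r \<noteq> r" using prp[of i r] ci that assms by (auto simp: Vi K1rs_edge_def)
      then have cr: "c r = 0" using lst[of r] by (auto simp: L_def Vi)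
      have "c (r+1) \<noteq> r" using prp[of i "r+1"] ci that by (auto simp: Vi K1rs_edge_def)
      then have cr1: "c (r+1) = 1" using lst[of "r+1"] by (auto simp: L_def Vi)
      have "c 0 \<noteq> 0" using prp[of 0 r] cr assms by (auto simp: Vi K1rs_edge_def)
      then have c0r: "c 0 = r" using lst[of 0] assms by (auto simp: L_def Vi)
      have "c 1 \<noteq> 1" using prp[of 1 "r+1"] cr1 assms by (auto simp: Vi K1rs_edge_def)
      then have c1r: "c 1 = r" using lst[of 1] assms by (auto simp: L_def Vi)
      have "c 0 \<noteq> c 1" using prp[of 0 1] assms by (auto simp: Vi K1rs_edge_def)
      then show False using c0r c1r by simp
    qed
    have B: "c v = r" if "r \<le> v" "v < r + 3" for v
    proof -
      have "c v \<noteq> c 0" using prp[of v 0] that assms by (auto simp: Vi K1rs_edge_def)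
      moreover have "c v \<noteq> c 1" using prp[of v 1] that assms by (auto simp: Vi K1rs_edge_def)
      moreover have "c v \<in> L v" using lst that by (simp add: Vi)
      ultimately show ?thesis using A[of 0] A[of 1] assms that by (auto simp: L_def split: if_splits)
    qed
    show ?thesis
    proof
      fix v show "c v = c0 v"
        using A B out by (cases "v \<in> ?V") (auto simp: c0_def Vi)
    qed
  qed
  show ?thesis unfolding property_M_def uniquely_k_list_colorable_def
    using kl c0 un by blast
qed

theorem proposition3p7:
  fixes r :: nat
  assumes "r \<ge> 2"
  shows "m_number (K1rs_vertices r 3) (K1rs_edge r) = 3"
  unfolding m_number_def
proof (rule Least_equality)
  show "3 \<ge> (1::nat) \<and> property_M (K1rs_vertices r 3) (K1rs_edge r) 3"
    using M3 assms by auto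
next
  fix y assume "y \<ge> (1::nat) \<and> property_M (K1rs_vertices r 3) (K1rs_edge r) y"
  then show "3 \<le> y" using notM1[of r] notM2[OF assms]
    by (metis One_nat_def Suc_1 le_SucE le_antisym not_less_eq_eq numeral_3_eq_3)
qed

end
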